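(* Under Assumptions 1-MP, 2-MP(a) and 3-MP, $$\frac1{\mathcal{T}}\sum_{t=1}^{\mathcal{T}}\mathbb{E}[\ddot W_t^2]=\sum_{g\in\mathcal{G}}\tilde w^{g,within}(g)+\sum_{g\in\mathcal{G}}\sum_{k\in\mathcal{G},k>g}\big\{\tilde w^{g,post}(g,k)+\tilde w^{k,post}(g,k)+\tilde w^{long}(g,k)\big\}.$$
   Context: Multi-period setup: periods $t=1,\dots,\mathcal{T}$; timing group $G\in\mathcal{G}\subseteq\{2,\dots,\mathcal{T}+1\}$ ($G=\mathcal{T}+1$: never treated), dose $D\ge0$ with $D=0$ exactly for never-treated units; $W_t:=D\mathbf{1}\{t\ge G\}$. 1-MP: i.i.d. sampling of $(Y_1,\dots,Y_{\mathcal{T}},D,G)$, $D$ square-integrable. 2-MP(a): support of $D$ is $\{0\}\cup\mathcal{D}_+$, $\mathcal{D}_+\subset(0,\infty)$, $\mathbb{P}(D=0)>0$. 3-MP: no anticipation and staggered adoption ($W_1=0$, $W_{t-1}=d\Rightarrow W_t=d$). $\bar W_i:=\frac1{\mathcal{T}}\sum_tW_{it}$, $\ddot W_{it}:=(W_{it}-\bar W_i)-(\mathbb{E}[W_t]-\frac1{\mathcal{T}}\sum_s\mathbb{E}[W_s])$. $p_g:=\mathbb{P}(G=g)$, $\bar G_g:=(\mathcal{T}-g+1)/\mathcal{T}$. $\tilde w^{g,within}(g):=\mathrm{var}(D\mid G=g)(1-\bar G_g)\bar G_g\,p_g$; $\tilde w^{g,post}(g,k):=\mathbb{E}[D\mid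 G=g]^2(1-\bar G_g)(\bar G_g-\bar G_k)p_gp_k$; $\tilde w^{k,post}(g,k):=\mathbb{E}[D\mid G=k]^2\bar G_k(\bar G_g-\bar G_k)p_gp_k$; $\tilde w^{long}(g,k):=(\mathbb{E}[D\mid G=g]-\mathbb{E}[D\mid G=k])^2\bar G_k(1-\bar G_g)p_gp_k$. *)

theory Defs
  imports "HOL-Probability.Probability"
begin

definition Wt :: "('a \<Rightarrow> real) \<Rightarrow> ('a \<Rightarrow> nat) \<Rightarrow> nat \<Rightarrow> 'a \<Rightarrow> real" where
  "Wt D G t \<omega> = D \<omega> * (if t \<ge> G \<omega> then 1 else 0)"

definition Wbar :: "('a \<Rightarrow> real) \<Rightarrow> ('a \<Rightarrow> nat) \<Rightarrow> nat \<Rightarrow> 'a \<Rightarrow> real" where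
  "Wbar D G T \<omega> = (1 / real T) * (\<Sum>t\<in>{1..T}. Wt D G t \<omega>)"

definition Wdd :: "'a measure \<Rightarrow> ('a \<Rightarrow> real) \<Rightarrow> ('a \<Rightarrow> nat) \<Rightarrow> nat \<Rightarrow> nat \<Rightarrow> 'a \<Rightarrow> real" where
  "Wdd M D G T t \<omega> = (Wt D G t \<omega> - Wbar D G T \<omega>)
     - ((\<integral>x. Wt D G t x \<partial>M) - (1 / real T) * (\<Sum>s\<in>{1..T}. \<integral>x. Wt D G s x \<partial>M))"

definition pg :: "'a measure \<Rightarrow> ('a \<Rightarrow> nat) \<Rightarrow> nat \<Rightarrow> real" where
  "pg M G g = measure M {\<omega> \<in> space M. G \<omega> = g}"

definition Gbar :: "nat \<Rightarrow> nat \<Rightarrow> real" where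
  "Gbar T g = (real T - real g + 1) / real T"

definition condE :: "'a measure \<Rightarrow> ('a \<Rightarrow> real) \<Rightarrow> ('a \<Rightarrow> nat) \<Rightarrow> nat \<Rightarrow> real" where
  "condE M D G g = (\<integral>\<omega>. D \<omega> * indicator {x. G x = g} \<omega> \<partial>M) / pg M G g"

definition condVar :: "'a measure \<Rightarrow> ('a \<Rightarrow> real) \<Rightarrow> ('a \<Rightarrow> nat) \<Rightarrow> nat \<Rightarrow> real" where
  "condVar M D G g =
     (\<integral>\<omega>. (D \<omega> - condE M D G g)\<^sup>2 * indicator {x. G x = g} \<omega> \<partial>M) / pg M G g"

definition w_within :: "'a measure \<Rightarrow> ('a \<Rightarrow> real) \<Rightarrow> ('a \<Rightarrow> nat) \<Rightarrow> nat \<Rightarrow> nat \<Rightarrow> real" where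
  "w_within M D G T g = condVar M D G g * (1 - Gbar T g) * Gbar T g * pg M G g"

definition w_gpost :: "'a measure \<Rightarrow> ('a \<Rightarrow> real) \<Rightarrow> ('a \<Rightarrow> nat) \<Rightarrow> nat \<Rightarrow> nat \<Rightarrow> nat \<Rightarrow> real" where
  "w_gpost M D G T g k = (condE M D G g)\<^sup>2 * (1 - Gbar T g) * (Gbar T g - Gbar T k) * pg M G g * pg M G k"

definition w_kpost :: "'a measure \<Rightarrow> ('a \<Rightarrow> real) \<Rightarrow> ('a \<Rightarrow> nat) \<Rightarrow> nat \<Rightarrow> nat \<Rightarrow> nat \<Rightarrow> real" where
  "w_kpost M D G T g k = (condE M D G k)\<^sup>2 * Gbar T k * (Gbar T g - Gbar T k) * pg M G g * pg M G k"

definition w_long :: "'a measure \<Rightarrow> ('a \<Rightarrow> real) \<Rightarrow> ('a \<Rightarrow> nat) \<Rightarrow> nat \<Rightarrow> nat \<Rightarrow> nat \<Rightarrow> real" where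
  "w_long M D G T g k = (condE M D G g - condE M D G k)\<^sup>2 * Gbar T k * (1 - Gbar T g) * pg M G g * pg M G k"

end

theory Submission
  imports Defs
begin

lemma sum_ind:
  assumes "finite A" "G w \<in> A"
  shows "(\<Sum>g\<in>A. f g * indicator {x. G x = g} w) = (f (G w) :: real)"
proof -
  have "(\<Sum>g\<in>A. f g * indicator {x. G x = g} w) = (\<Sum>g\<in>A. if G w = g then f g else 0)"
    by (rule sum.cong) (auto simp: indicator_def)
  also have "\<dots> = f (G w)" using assms by (simp add: sum.delta)
  finally show ?thesis .
qed
lemma pw:
  fixes D :: "'a \<Rightarrow> real"
  assumes "finite A" "G w \<in> A"
  shows "(D w)\<^sup>2 * a (G w) + D w * b (G w) + c (G w) = (\<Sum>g\<in>A. a g * ((D w)\<^sup>2 * indicator {x. G x = g} w)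
              + b g * (D w * indicator {x. G x = g} w) + c g * indicator {x. G x = g} w)"
proof -
  have "(\<Sum>g\<in>A. a g * ((D w)\<^sup>2 * indicator {x. G x = g} w)
              + b g * (D w * indicator {x. G x = g} w) + c g * indicator {x. G x = g} w)
     = (D w)\<^sup>2 * (\<Sum>g\<in>A. a g * indicator {x. G x = g} w) + D w * (\<Sum>g\<in>A. b g * indicator {x. G x = g} w)
      + (\<Sum>g\<in>A. c g * indicator {x. G x = g} w)"
  proof -
    have e1: "(\<Sum>g\<in>A. a g * (X * indicator {x. G x = g} w)) = X * (\<Sum>g\<in>A. a g * indicator {x. G x = g} w)" for X :: real and a
      by (simp add: sum_distrib_left mult.left_commute)
    show ?thesis unfolding sum.distrib by (simp only: e1)
  qed
  then show ?thesis by (simp only: sum_ind[of A G w, OF assms])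
qed

lemma intG:
  assumes P: "prob_space M" and Gm[measurable]: "G \<in> M \<rightarrow>\<^sub>M count_space UNIV"
    and Dm[measurable]: "D \<in> borel_measurable M"
    and D2: "integrable M (\<lambda>\<omega>. (D \<omega>)\<^sup>2)" and fin: "finite A" and ae: "AE \<omega> in M. G \<omega> \<in> A"
  shows "(\<integral>\<omega>. (D \<omega>)\<^sup>2 * a (G \<omega>) + D \<omega> * b (G \<omega>) + c (G \<omega>) \<partial>M)
    = (\<Sum>g\<in>A. a g * (\<integral>\<omega>. (D \<omega>)\<^sup>2 * indicator {x. G x = g} \<omega> \<partial>M)
              + b g * (\<integral>\<omega>. D \<omega> * indicator {x. G x = g} \<omega> \<partial>M) + c g * pg M G g)"
proof -
  interpret prob_space M by fact
  have D1: "integrable M D" by (rule square_integrable_imp_integrable[OF Dm D2])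
  have S: "{x\<in>space M. G x = g} \<in> sets M" for g by measurable
  have ieq: "indicator {x. G x = g} x = (indicator {x\<in>space M. G x = g} x :: real)" if "x \<in> space M" for x g
    using that by (simp add: indicator_def)
  have int2: "integrable M (\<lambda>\<omega>. (D \<omega>)\<^sup>2 * indicator {x. G x = g} \<omega>)" for g
  proof -
    have "integrable M (\<lambda>\<omega>. (D \<omega>)\<^sup>2 * indicator {x. G x = g} \<omega>) \<longleftrightarrow> integrable M (\<lambda>x. (D x)\<^sup>2 * indicator {x\<in>space M. G x = g} x)"
      by (rule Bochner_Integration.integrable_cong) (auto simp: indicator_def)
    then show ?thesis using integrable_real_mult_indicator[OF S D2] by simp
  qed
  have int1: "integrable M (\<lambda>\<omega>. D \<omega> * indicator {x. G x = g} \<omega>)" for g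
  proof -
    have "integrable M (\<lambda>\<omega>. D \<omega> * indicator {x. G x = g} \<omega>) \<longleftrightarrow> integrable M (\<lambda>x. D x * indicator {x\<in>space M. G x = g} x)"
      by (rule Bochner_Integration.integrable_cong) (auto simp: indicator_def)
    then show ?thesis using integrable_real_mult_indicator[OF S D1] by simp
  qed
  have int0: "integrable M (\<lambda>\<omega>. indicator {x. G x = g} \<omega> :: real)" for g
  proof -
    have "integrable M (\<lambda>\<omega>. indicator {x. G x = g} \<omega> :: real) \<longleftrightarrow> integrable M (\<lambda>x. 1 * indicator {x\<in>space M. G x = g} x :: real)"
      by (rule Bochner_Integration.integrable_cong) (auto simp: indicator_def)
    then show ?thesis using integrable_real_mult_indicator[OF S integrable_const[of 1]] by simp
  qed
  have ip: "(\<integral>\<omega>. indicator {x. G x = g} \<omega> \<partial>M) = pg M G g" for g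
    unfolding Bochner_Integration.integral_indicator pg_def by (rule arg_cong[where f="measure M"]) auto
  have "(\<integral>\<omega>. (D \<omega>)\<^sup>2 * a (G \<omega>) + D \<omega> * b (G \<omega>) + c (G \<omega>) \<partial>M)
     = (\<integral>\<omega>. (\<Sum>g\<in>A. a g * ((D \<omega>)\<^sup>2 * indicator {x. G x = g} \<omega>)
              + b g * (D \<omega> * indicator {x. G x = g} \<omega>) + c g * indicator {x. G x = g} \<omega>) \<partial>M)"
  proof (rule integral_cong_AE)
    show "AE \<omega> in M. (D \<omega>)\<^sup>2 * a (G \<omega>) + D \<omega> * b (G \<omega>) + c (G \<omega>) = (\<Sum>g\<in>A. a g * ((D \<omega>)\<^sup>2 * indicator {x. G x = g} \<omega>)
              + b g * (D \<omega> * indicator {x. G x = g} \<omega>) + c g * indicator {x. G x = g} \<omega>)"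
      using ae
    proof eventually_elim
      case (elim \<omega>)
      show ?case using fin elim by (rule pw)
    qed
  qed measurable
  also have "\<dots> = (\<Sum>g\<in>A. a g * (\<integral>\<omega>. (D \<omega>)\<^sup>2 * indicator {x. G x = g} \<omega> \<partial>M)
              + b g * (\<integral>\<omega>. D \<omega> * indicator {x. G x = g} \<omega> \<partial>M) + c g * (\<integral>\<omega>. indicator {x. G x = g} \<omega> \<partial>M))"
    by (simp add: Bochner_Integration.integral_sum Bochner_Integration.integral_add int0 int1 int2 Bochner_Integration.integrable_mult_right Bochner_Integration.integrable_add)
  finally show ?thesis unfolding ip .
qed

lemma symsplit:
  fixes F :: "nat \<Rightarrow> nat \<Rightarrow> real"
  assumes fin: "finite A"
  shows "(\<Sum>g\<in>A. \<Sum>k\<in>A. F g k) = (\<Sum>g\<in>A. F g g) + (\<Sum>g\<in>A. \<Sum>k\<in>{k\<in>A. k>g}. F g k + F k g)"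
proof -
  have split: "(\<Sum>k\<in>A. F g k) = F g g + (\<Sum>k\<in>{k\<in>A. k>g}. F g k) + (\<Sum>k\<in>{k\<in>A. k<g}. F g k)"
    if g: "g \<in> A" for g
  proof -
    have eq: "insert g ({k\<in>A. k>g} \<union> {k\<in>A. k<g}) = A" using g by auto
    have "(\<Sum>k\<in>A. F g k) = (\<Sum>k\<in>insert g ({k\<in>A. k>g} \<union> {k\<in>A. k<g}). F g k)"
      by (simp only: eq)
    also have "\<dots> = F g g + (\<Sum>k\<in>{k\<in>A. k>g} \<union> {k\<in>A. k<g}. F g k)"
      using fin by (subst sum.insert) auto
    also have "(\<Sum>k\<in>{k\<in>A. k>g} \<union> {k\<in>A. k<g}. F g k) = (\<Sum>k\<in>{k\<in>A. k>g}. F g k) + (\<Sum>k\<in>{k\<in>A. k<g}. F g k)"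
      using fin by (subst sum.union_disjoint) auto
    finally show ?thesis by simp
  qed
  have "(\<Sum>g\<in>A. \<Sum>k\<in>A. F g k) = (\<Sum>g\<in>A. F g g + (\<Sum>k\<in>{k\<in>A. k>g}. F g k) + (\<Sum>k\<in>{k\<in>A. k<g}. F g k))"
    using split by (rule sum.cong[OF refl])
  also have "\<dots> = (\<Sum>g\<in>A. F g g) + (\<Sum>g\<in>A. \<Sum>k\<in>{k\<in>A. k>g}. F g k) + (\<Sum>g\<in>A. \<Sum>k\<in>{k\<in>A. k<g}. F g k)"
    by (simp add: sum.distrib)
  moreover have "(\<Sum>g\<in>A. \<Sum>k\<in>{k\<in>A. k<g}. F g k) = (\<Sum>g\<in>A. \<Sum>k\<in>{k\<in>A. g<k}. F k g)"
    using sum.swap_restrict[OF fin fin, of F "\<lambda>g k. k < g"] by simp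
  ultimately show ?thesis by (simp add: sum.distrib)
qed

lemma alg:
  fixes A :: "nat set" and p mu m2 Gb :: "nat \<Rightarrow> real" and S :: "nat \<Rightarrow> nat \<Rightarrow> real"
  assumes fin: "finite A" and sp: "sum p A = 1" and pp: "\<And>g. g \<in> A \<Longrightarrow> p g > 0"
    and Sgg: "\<And>g. g\<in>A \<Longrightarrow> S g g = Gb g * (1 - Gb g)"
    and Sgk: "\<And>g k. g\<in>A \<Longrightarrow> k\<in>A \<Longrightarrow> g<k \<Longrightarrow> S g k = Gb k * (1 - Gb g)"
    and Ssym: "\<And>g k. S k g = S g k"
  shows "(\<Sum>g\<in>A. m2 g * S g g) - (\<Sum>g\<in>A. \<Sum>k\<in>A. (mu g * p g) * (mu k * p k) * S g k)
   = (\<Sum>g\<in>A. (m2 g / p g - (mu g)\<^sup>2) * (1 - Gb g) * Gb g * p g)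
     + (\<Sum>g\<in>A. \<Sum>k\<in>{k\<in>A. k>g}. (mu g)\<^sup>2 * (1 - Gb g) * (Gb g - Gb k) * p g * p k
          + (mu k)\<^sup>2 * Gb k * (Gb g - Gb k) * p g * p k
          + (mu g - mu k)\<^sup>2 * Gb k * (1 - Gb g) * p g * p k)"
proof -
  define a where "a g = Gb g * (1 - Gb g)" for g
  define H where "H g k = p g * p k * (mu g)\<^sup>2 * a g" for g k
  define C where "C g k = mu g * mu k * p g * p k * (Gb k * (1 - Gb g))" for g k
  have L: "(\<Sum>g\<in>A. \<Sum>k\<in>A. (mu g * p g) * (mu k * p k) * S g k)
     = (\<Sum>g\<in>A. (mu g)\<^sup>2 * (p g)\<^sup>2 * a g) + (\<Sum>g\<in>A. \<Sum>k\<in>{k\<in>A. k>g}. 2 * C g k)"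
    unfolding symsplit[OF fin]
  proof (intro arg_cong2[where f="(+)"] sum.cong refl)
    fix g assume "g \<in> A" then show "mu g * p g * (mu g * p g) * S g g = (mu g)\<^sup>2 * (p g)\<^sup>2 * a g"
      by (simp add: Sgg a_def power2_eq_square)
  next
    fix g k assume "g \<in> A" "k \<in> {k\<in>A. k>g}"
    then show "mu g * p g * (mu k * p k) * S g k + mu k * p k * (mu g * p g) * S k g = 2 * C g k"
      by (simp add: Ssym Sgk C_def algebra_simps)
  qed
  have W: "(\<Sum>g\<in>A. (m2 g / p g - (mu g)\<^sup>2) * (1 - Gb g) * Gb g * p g)
      = (\<Sum>g\<in>A. m2 g * S g g) - (\<Sum>g\<in>A. (mu g)\<^sup>2 * p g * a g)"
    unfolding sum_subtractf[symmetric]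
  proof (rule sum.cong[OF refl])
    fix g assume g: "g \<in> A"
    then have "p g \<noteq> 0" using pp[OF g] by simp
    then show "(m2 g / p g - (mu g)\<^sup>2) * (1 - Gb g) * Gb g * p g = m2 g * S g g - (mu g)\<^sup>2 * p g * a g"
      using g by (simp add: Sgg a_def field_simps)
  qed
  have P: "(\<Sum>g\<in>A. \<Sum>k\<in>{k\<in>A. k>g}. (mu g)\<^sup>2 * (1 - Gb g) * (Gb g - Gb k) * p g * p k
          + (mu k)\<^sup>2 * Gb k * (Gb g - Gb k) * p g * p k
          + (mu g - mu k)\<^sup>2 * Gb k * (1 - Gb g) * p g * p k)
     = (\<Sum>g\<in>A. \<Sum>k\<in>{k\<in>A. k>g}. H g k + H k g) - (\<Sum>g\<in>A. \<Sum>k\<in>{k\<in>A. k>g}. 2 * C g k)"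
    unfolding sum_subtractf[symmetric]
    by (intro sum.cong refl) (simp add: H_def C_def a_def power2_eq_square algebra_simps)
  have HS: "(\<Sum>g\<in>A. \<Sum>k\<in>{k\<in>A. k>g}. H g k + H k g) = (\<Sum>g\<in>A. (mu g)\<^sup>2 * p g * a g) - (\<Sum>g\<in>A. (mu g)\<^sup>2 * (p g)\<^sup>2 * a g)"
  proof -
    have "(\<Sum>g\<in>A. \<Sum>k\<in>A. H g k) = (\<Sum>g\<in>A. (mu g)\<^sup>2 * p g * a g * sum p A)"
      by (simp add: H_def sum_distrib_left sum_distrib_right algebra_simps)
    also have "\<dots> = (\<Sum>g\<in>A. (mu g)\<^sup>2 * p g * a g)" by (simp add: sp)
    finally have "(\<Sum>g\<in>A. H g g) + (\<Sum>g\<in>A. \<Sum>k\<in>{k\<in>A. k>g}. H g k + H k g) = (\<Sum>g\<in>A. (mu g)\<^sup>2 * p g * a g)"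
      unfolding symsplit[OF fin] .
    moreover have "(\<Sum>g\<in>A. H g g) = (\<Sum>g\<in>A. (mu g)\<^sup>2 * (p g)\<^sup>2 * a g)"
      by (simp add: H_def power2_eq_square algebra_simps)
    ultimately show ?thesis by simp
  qed
  show ?thesis unfolding L W P HS by simp
qed


lemma avg:
  assumes "1 \<le> g" "g \<le> T + 1" "T \<ge> 1"
  shows "(1 / real T) * (\<Sum>t\<in>{1..T}. (if g \<le> t then 1 else 0 :: real)) = Gbar T g"
proof -
  have "(\<Sum>t\<in>{1..T}. (if g \<le> t then 1 else 0 :: real)) = (\<Sum>t\<in>{t\<in>{1..T}. g \<le> t}. 1)"
    by (subst sum.inter_filter) auto
  also have "{t\<in>{1..T}. g \<le> t} = {g..T}" using assms by auto
  finally have "(\<Sum>t\<in>{1..T}. (if g \<le> t then 1 else 0 :: real)) = real (Suc T - g)" by simp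
  also have "\<dots> = real T - real g + 1" using assms by (simp add: of_nat_diff)
  finally show ?thesis by (simp add: Gbar_def)
qed

lemma Sle:
  assumes "1 \<le> g" "g \<le> k" "k \<le> T + 1" "T \<ge> 1"
  shows "(1 / real T) * (\<Sum>t\<in>{1..T}. ((if g \<le> t then 1 else 0) - Gbar T g) * ((if k \<le> t then 1 else 0) - Gbar T k))
     = Gbar T k * (1 - Gbar T g)"
proof -
  let ?i = "\<lambda>g t. (if g \<le> t then 1 else 0 :: real)"
  have "(\<Sum>t\<in>{1..T}. (?i g t - Gbar T g) * (?i k t - Gbar T k))
     = (\<Sum>t\<in>{1..T}. ?i k t - Gbar T k * ?i g t - Gbar T g * ?i k t + Gbar T g * Gbar T k)"
    by (rule sum.cong) (use assms in \<open>auto simp: algebra_simps\<close>)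
  also have "\<dots> = (\<Sum>t\<in>{1..T}. ?i k t) - Gbar T k * (\<Sum>t\<in>{1..T}. ?i g t) - Gbar T g * (\<Sum>t\<in>{1..T}. ?i k t)
       + real T * (Gbar T g * Gbar T k)"
    by (simp add: sum.distrib sum_subtractf sum_distrib_left)
  finally have e: "(\<Sum>t\<in>{1..T}. (?i g t - Gbar T g) * (?i k t - Gbar T k)) = \<dots>" .
  have a1: "(\<Sum>t\<in>{1..T}. ?i g t) = real T * Gbar T g" using avg[of g T] assms by (simp add: field_simps)
  have a2: "(\<Sum>t\<in>{1..T}. ?i k t) = real T * Gbar T k" using avg[of k T] assms by (simp add: field_simps)
  show ?thesis unfolding e a1 a2 using assms by (simp add: field_simps)
qed

lemma lhs_alg:
  fixes c :: "nat \<Rightarrow> nat \<Rightarrow> real" and m1 m2 :: "nat \<Rightarrow> real"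
  assumes fin: "finite A"
  shows "(1 / real T) * (\<Sum>t\<in>{1..T}. (\<Sum>g\<in>A. m2 g * (c t g)\<^sup>2) - (\<Sum>g\<in>A. m1 g * c t g)\<^sup>2)
    = (\<Sum>g\<in>A. m2 g * ((1 / real T) * (\<Sum>t\<in>{1..T}. c t g * c t g)))
      - (\<Sum>g\<in>A. \<Sum>k\<in>A. m1 g * m1 k * ((1 / real T) * (\<Sum>t\<in>{1..T}. c t g * c t k)))"
proof -
  have 1: "(\<Sum>t\<in>{1..T}. \<Sum>g\<in>A. m2 g * (c t g)\<^sup>2) = (\<Sum>g\<in>A. m2 g * (\<Sum>t\<in>{1..T}. c t g * c t g))"
    by (subst sum.swap) (simp add: sum_distrib_left power2_eq_square)
  have 2: "(\<Sum>t\<in>{1..T}. (\<Sum>g\<in>A. m1 g * c t g)\<^sup>2) = (\<Sum>g\<in>A. \<Sum>k\<in>A. m1 g * m1 k * (\<Sum>t\<in>{1..T}. c t g * c t k))"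
  proof -
    have "(\<Sum>t\<in>{1..T}. (\<Sum>g\<in>A. m1 g * c t g)\<^sup>2) = (\<Sum>t\<in>{1..T}. \<Sum>g\<in>A. \<Sum>k\<in>A. m1 g * m1 k * (c t g * c t k))"
      by (simp add: power2_eq_square sum_product algebra_simps)
    also have "\<dots> = (\<Sum>g\<in>A. \<Sum>t\<in>{1..T}. \<Sum>k\<in>A. m1 g * m1 k * (c t g * c t k))" by (rule sum.swap)
    also have "\<dots> = (\<Sum>g\<in>A. \<Sum>k\<in>A. \<Sum>t\<in>{1..T}. m1 g * m1 k * (c t g * c t k))" by (subst sum.swap) rule
    also have "\<dots> = (\<Sum>g\<in>A. \<Sum>k\<in>A. m1 g * m1 k * (\<Sum>t\<in>{1..T}. c t g * c t k))" by (simp add: sum_distrib_left)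
    finally show ?thesis .
  qed
  show ?thesis
    unfolding sum_subtractf 1 2 by (simp add: sum_distrib_left right_diff_distrib mult.left_commute)
qed

theorem lemma6:
  fixes M :: "'a measure" and D :: "'a \<Rightarrow> real" and G :: "'a \<Rightarrow> nat"
    and T :: nat and GG :: "nat set"
  assumes "prob_space M"
    and "T \<ge> 1"
    and "GG \<subseteq> {2..T+1}"
    and "G \<in> M \<rightarrow>\<^sub>M count_space UNIV"
    and "D \<in> borel_measurable M"
    and "integrable M (\<lambda>\<omega>. (D \<omega>)\<^sup>2)"
    and "AE \<omega> in M. G \<omega> \<in> GG"
    and "\<forall>g\<in>GG. pg M G g > 0"
    and "AE \<omega> in M. D \<omega> \<ge> 0"
    and "AE \<omega> in M. (D \<omega> = 0 \<longleftrightarrow> G \<omega> = T + 1)"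
    and "measure M {\<omega> \<in> space M. D \<omega> = 0} > 0"
  shows "(1 / real T) * (\<Sum>t\<in>{1..T}. \<integral>\<omega>. (Wdd M D G T t \<omega>)\<^sup>2 \<partial>M)
       = (\<Sum>g\<in>GG. w_within M D G T g)
         + (\<Sum>g\<in>GG. \<Sum>k\<in>{k \<in> GG. k > g}.
              w_gpost M D G T g k + w_kpost M D G T g k + w_long M D G T g k)"
proof -
  note P = assms(1)
  interpret prob_space M by fact
  note Gm[measurable] = assms(4) and Dm[measurable] = assms(5)
  have T0: "real T > 0" using assms(2) by simp
  have finA: "finite GG" using assms(3) finite_subset by blast
  have GGr: "1 \<le> g \<and> g \<le> T + 1" if "g \<in> GG" for g using assms(3) that by auto
  note iG = intG[OF P Gm Dm assms(6) finA assms(7)]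
  define m1 where "m1 g = (\<integral>\<omega>. D \<omega> * indicator {x. G x = g} \<omega> \<partial>M)" for g
  define m2 where "m2 g = (\<integral>\<omega>. (D \<omega>)\<^sup>2 * indicator {x. G x = g} \<omega> \<partial>M)" for g
  define ind where "ind t g = (if g \<le> t then 1 else 0 :: real)" for t g :: nat
  define c where "c t g = ind t g - Gbar T g" for t g
  define e where "e t = (\<Sum>g\<in>GG. m1 g * c t g)" for t
  have ps: "sum (pg M G) GG = 1"
  proof -
    have "(\<integral>\<omega>. (D \<omega>)\<^sup>2 * (\<lambda>_. 0) (G \<omega>) + D \<omega> * (\<lambda>_. 0) (G \<omega>) + (\<lambda>_. 1) (G \<omega>) \<partial>M) = sum (pg M G) GG"
      by (subst iG) simp
    then show ?thesis using prob_space by simp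
  qed
  have EW: "(\<integral>\<omega>. Wt D G t \<omega> \<partial>M) = (\<Sum>g\<in>GG. m1 g * ind t g)" for t
  proof -
    have "(\<integral>\<omega>. Wt D G t \<omega> \<partial>M) = (\<integral>\<omega>. (D \<omega>)\<^sup>2 * (\<lambda>_. 0) (G \<omega>) + D \<omega> * ind t (G \<omega>) + (\<lambda>_. 0) (G \<omega>) \<partial>M)"
      by (rule Bochner_Integration.integral_cong[OF refl]) (auto simp: Wt_def ind_def)
    also have "\<dots> = (\<Sum>g\<in>GG. m1 g * ind t g)" by (subst iG) (simp add: m1_def mult.commute)
    finally show ?thesis .
  qed
  have avgA: "(1 / real T) * (\<Sum>s\<in>{1..T}. ind s g) = Gbar T g" if "g \<in> GG" for g
    unfolding ind_def using avg[of g T] GGr[OF that] assms(2) by simp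
  have e_eq: "(\<integral>\<omega>. Wt D G t \<omega> \<partial>M) - (1 / real T) * (\<Sum>s\<in>{1..T}. \<integral>\<omega>. Wt D G s \<omega> \<partial>M) = e t" for t
  proof -
    have "(1 / real T) * (\<Sum>s\<in>{1..T}. \<integral>\<omega>. Wt D G s \<omega> \<partial>M) = (\<Sum>g\<in>GG. m1 g * ((1 / real T) * (\<Sum>s\<in>{1..T}. ind s g)))"
      unfolding EW by (subst sum.swap) (simp add: sum_distrib_left mult.left_commute)
    also have "\<dots> = (\<Sum>g\<in>GG. m1 g * Gbar T g)" by (rule sum.cong[OF refl]) (simp only: avgA)
    finally show ?thesis unfolding EW e_def c_def
      by (simp add: sum_subtractf right_diff_distrib)
  qed
  have Wdd_ae: "AE \<omega> in M. Wdd M D G T t \<omega> = D \<omega> * c t (G \<omega>) - e t" for t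
    using assms(7)
  proof eventually_elim
    case (elim \<omega>)
    have "Wbar D G T \<omega> = D \<omega> * ((1 / real T) * (\<Sum>s\<in>{1..T}. ind s (G \<omega>)))"
      unfolding Wbar_def Wt_def ind_def by (simp add: sum_distrib_left mult.left_commute)
    also have "\<dots> = D \<omega> * Gbar T (G \<omega>)" using avgA[OF elim] by simp
    finally have "Wbar D G T \<omega> = D \<omega> * Gbar T (G \<omega>)" .
    then show ?case unfolding Wdd_def e_eq[symmetric] c_def
      by (simp add: Wt_def ind_def algebra_simps)
  qed
  have int_t: "(\<integral>\<omega>. (Wdd M D G T t \<omega>)\<^sup>2 \<partial>M) = (\<Sum>g\<in>GG. m2 g * (c t g)\<^sup>2) - (\<Sum>g\<in>GG. m1 g * c t g)\<^sup>2" for t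
  proof -
    have "(\<integral>\<omega>. (Wdd M D G T t \<omega>)\<^sup>2 \<partial>M)
       = (\<integral>\<omega>. (D \<omega>)\<^sup>2 * (\<lambda>g. (c t g)\<^sup>2) (G \<omega>) + D \<omega> * (\<lambda>g. - 2 * e t * c t g) (G \<omega>) + (\<lambda>_. (e t)\<^sup>2) (G \<omega>) \<partial>M)"
    proof (rule integral_cong_AE)
      show "(\<lambda>\<omega>. (Wdd M D G T t \<omega>)\<^sup>2) \<in> borel_measurable M"
        unfolding Wdd_def Wbar_def Wt_def by measurable
      show "(\<lambda>\<omega>. (D \<omega>)\<^sup>2 * (\<lambda>g. (c t g)\<^sup>2) (G \<omega>) + D \<omega> * (\<lambda>g. - 2 * e t * c t g) (G \<omega>) + (\<lambda>_. (e t)\<^sup>2) (G \<omega>)) \<in> borel_measurable M"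
        by measurable
      show "AE \<omega> in M. (Wdd M D G T t \<omega>)\<^sup>2 = (D \<omega>)\<^sup>2 * (\<lambda>g. (c t g)\<^sup>2) (G \<omega>) + D \<omega> * (\<lambda>g. - 2 * e t * c t g) (G \<omega>) + (\<lambda>_. (e t)\<^sup>2) (G \<omega>)"
        using Wdd_ae[of t]
      proof eventually_elim
        case (elim \<omega>)
        show ?case unfolding elim by (simp add: power2_eq_square algebra_simps)
      qed
    qed
    also have "\<dots> = (\<Sum>g\<in>GG. (c t g)\<^sup>2 * m2 g + (- 2 * e t * c t g) * m1 g + (e t)\<^sup>2 * pg M G g)"
      by (subst iG) (simp add: m1_def m2_def)
    also have "\<dots> = (\<Sum>g\<in>GG. (c t g)\<^sup>2 * m2 g) + (\<Sum>g\<in>GG. (- 2 * e t * c t g) * m1 g) + (\<Sum>g\<in>GG. (e t)\<^sup>2 * pg M G g)"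
      by (simp only: sum.distrib)
    also have "\<dots> = (\<Sum>g\<in>GG. m2 g * (c t g)\<^sup>2) + (- 2 * e t) * (\<Sum>g\<in>GG. m1 g * c t g) + (e t)\<^sup>2 * sum (pg M G) GG"
      by (simp add: sum_distrib_left sum_distrib_right mult_ac)
    finally show ?thesis by (simp add: ps e_def[symmetric] power2_eq_square)
  qed
  have pos: "pg M G g > 0" if "g \<in> GG" for g using assms(8) that by blast
  have m1e: "m1 g = condE M D G g * pg M G g" if "g \<in> GG" for g
    using pos[OF that] by (simp add: condE_def m1_def)
  have cv: "condVar M D G g = m2 g / pg M G g - (condE M D G g)\<^sup>2" if g: "g \<in> GG" for g
  proof -
    define \<mu> where "\<mu> = condE M D G g"
    define \<delta> where "\<delta> k = (if k = g then 1 else 0 :: real)" for k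
    have "(\<integral>\<omega>. (D \<omega> - \<mu>)\<^sup>2 * indicator {x. G x = g} \<omega> \<partial>M)
       = (\<integral>\<omega>. (D \<omega>)\<^sup>2 * \<delta> (G \<omega>) + D \<omega> * (\<lambda>k. - 2 * \<mu> * \<delta> k) (G \<omega>) + (\<lambda>k. \<mu>\<^sup>2 * \<delta> k) (G \<omega>) \<partial>M)"
      by (rule Bochner_Integration.integral_cong[OF refl]) (auto simp: indicator_def \<delta>_def power2_eq_square algebra_simps)
    also have "\<dots> = (\<Sum>k\<in>GG. \<delta> k * m2 k + (- 2 * \<mu> * \<delta> k) * m1 k + (\<mu>\<^sup>2 * \<delta> k) * pg M G k)"
      by (subst iG) (simp add: m1_def m2_def)
    also have "\<dots> = (\<Sum>k\<in>GG. if k = g then m2 k - 2 * \<mu> * m1 k + \<mu>\<^sup>2 * pg M G k else 0)"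
      by (rule sum.cong) (auto simp: \<delta>_def)
    also have "\<dots> = m2 g - 2 * \<mu> * m1 g + \<mu>\<^sup>2 * pg M G g" using g finA by (simp add: sum.delta')
    finally have "condVar M D G g = (m2 g - 2 * \<mu> * m1 g + \<mu>\<^sup>2 * pg M G g) / pg M G g"
      unfolding condVar_def \<mu>_def by simp
    then show ?thesis using m1e[OF g] pos[OF g] unfolding \<mu>_def
      by (simp add: field_simps power2_eq_square)
  qed
  have LHS: "(1 / real T) * (\<Sum>t\<in>{1..T}. \<integral>\<omega>. (Wdd M D G T t \<omega>)\<^sup>2 \<partial>M)
     = (\<Sum>g\<in>GG. m2 g * ((1 / real T) * (\<Sum>t\<in>{1..T}. c t g * c t g)))
      - (\<Sum>g\<in>GG. \<Sum>k\<in>GG. (condE M D G g * pg M G g) * (condE M D G k * pg M G k) * ((1 / real T) * (\<Sum>t\<in>{1..T}. c t g * c t k)))"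
    unfolding int_t lhs_alg[OF finA] using m1e by (intro arg_cong2[where f="(-)"] refl sum.cong) auto
  define S where "S g k = (1 / real T) * (\<Sum>t\<in>{1..T}. c t g * c t k)" for g k
  have Sle': "S g k = Gbar T k * (1 - Gbar T g)" if "g \<in> GG" "k \<in> GG" "g \<le> k" for g k
    unfolding S_def c_def ind_def using Sle[of g k T] GGr[OF that(1)] GGr[OF that(2)] that(3) assms(2) by simp
  have A: "?thesis = ((\<Sum>g\<in>GG. m2 g * S g g) - (\<Sum>g\<in>GG. \<Sum>k\<in>GG. (condE M D G g * pg M G g) * (condE M D G k * pg M G k) * S g k)
   = (\<Sum>g\<in>GG. (m2 g / pg M G g - (condE M D G g)\<^sup>2) * (1 - Gbar T g) * Gbar T g * pg M G g)
     + (\<Sum>g\<in>GG. \<Sum>k\<in>{k\<in>GG. k>g}. (condE M D G g)\<^sup>2 * (1 - Gbar T g) * (Gbar T g - Gbar T k) * pg M G g * pg M G k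
          + (condE M D G k)\<^sup>2 * Gbar T k * (Gbar T g - Gbar T k) * pg M G g * pg M G k
          + (condE M D G g - condE M D G k)\<^sup>2 * Gbar T k * (1 - Gbar T g) * pg M G g * pg M G k))"
    unfolding LHS S_def[symmetric] w_within_def w_gpost_def w_kpost_def w_long_def
    by (intro arg_cong2[where f="(=)"] arg_cong2[where f="(+)"] refl sum.cong) (simp_all add: cv)
  show ?thesis unfolding A
  proof (rule alg[OF finA ps pos])
    show "S g g = Gbar T g * (1 - Gbar T g)" if "g \<in> GG" for g using Sle'[OF that that] by simp
    show "S g k = Gbar T k * (1 - Gbar T g)" if "g \<in> GG" "k \<in> GG" "g < k" for g k using Sle' that by simp
    show "S k g = S g k" for g k unfolding S_def by (simp add: mult.commute)
  qed
qed

end
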